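(* Let $\mathscr{A}\in\mathbb{R}^{n_1\times n_2\times n_3}$, $\mathscr{B}\in\mathbb{R}^{n_1\times s\times n_3}$, and suppose $k$ steps of the tensor tubal-global Golub–Kahan algorithm described in the context have been run (without breakdown). Starting from the zero initial guess, for $\mathscr{Y}\in\mathbb{R}^{k\times1\times n_3}$ let $\mathscr{X}_k=\mathbb{V}_k\star(\mathscr{Y}\circledast\mathscr{I}_{ssn_3})$. Then $$\|\mathscr{B}-\mathscr{A}\star\mathscr{X}_k\|_F=\|\mathscr{E}_1^{(k+1)}\star\mathbf{a}_1-\widetilde{\mathscr{C}}_k\star\mathscr{Y}\|_{T_{\ell_2}}.$$
   Context: All tensors are real third-order arrays; $\|\cdot\|_F$ is the Frobenius norm of the array. $\widehat{\mathscr{A}}=\mathscr{A}\times_3F_{n_3}$ denotes the tensor obtained by applying the discrete Fourier transform ($F_{n_3}$ with entries $\omega^{(i-1)(j-1)}$, $\omega=e^{-2\pi\mathrm{i}/n_3}$) to each tube; its frontal slices $\hat A^{(k)}$ are the Fourier slices. T-product: $\mathscr{A}\star\mathscr{B}$ has Fourier slices $\hat A^{(k)}\hat B^{(k)}$. Transpose $\mathscr{A}^T$: transpose each frontal slice and reverse the order of frontal slices $2,\dots,n_3$. $\mathscr{I}_{ssn_3}$: first frontal slice $I_s$, others zero. T-Kronecker product $\mathscr{A}\circledast\mathscr{B}$: Fourier slices $\hat A^{(k)}\otimes\hat B^{(k)}$. A tube is an element of $\mathbb{R}^{1\times1\times n_3}$; $\mathbf{e}$ has entries $(1,0,\dots,0)$,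 $\mathbf{o}$ is the zero tube. For a tube $\mathbf{a}$, $\mathbf{a}\divideontimes\mathscr{W}$ has $(i,j)$ tube $\mathbf{a}\star\mathscr{W}(i,j,:)$. Normalization of $\mathscr{W}$: $\mathbf{a}$ is the tube with $k$-th Fourier coefficient $\|\hat W^{(k)}\|_F$ (breakdown if one is zero) and $\mathscr{Q}$ has Fourier slices $\hat W^{(k)}/\|\hat W^{(k)}\|_F$; output $[\mathscr{Q},\mathbf{a}]$. Tubal-global Golub–Kahan algorithm: $\mathscr{V}_0=0\in\mathbb{R}^{n_2\times s\times n_3}$, $[\mathscr{U}_1,\mathbf{a}_1]=\mathrm{Normalization}(\mathscr{B})$; for $j=1,\dots,k$: $\widetilde{\mathscr{V}}=\mathscr{A}^T\star\mathscr{U}_j-\mathbf{a}_j\divideontimes\mathscr{V}_{j-1}$, $[\mathscr{V}_j,\mathbf{b}_j]=\mathrm{Normalization}(\widetilde{\mathscr{V}})$, $\widetilde{\mathscr{U}}=\mathscr{A}\star\mathscr{V}_j-\mathbf{b}_j\divideontimes\mathscr{U}_j$, $[\mathscr{U}_{j+1},\mathbf{a}_{j+1}]=\mathrm{Normalization}(\widetilde{\mathscr{U}})$. Notation: $\mathbb{V}_k=[\mathscr{V}_1,\dots,\mathscr{V}_k]\in\mathbb{R}^{n_2\times ks\times n_3}$ (concatenation along mode 2). $\widetilde{\mathscr{C}}_k\in\mathbb{R}^{(k+1)\times k\times n_3}$ is the bidiagonal tensor whose $(j,j)$ tube is $\mathbf{b}_j$, whose $(j+1,j)$ tube is $\mathbf{a}_{j+1}$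 ($j=1,\dots,k$), and other tubes $\mathbf{o}$. $\mathscr{E}_1^{(k+1)}=[\mathbf{e};\mathbf{o};\dots;\mathbf{o}]\in\mathbb{R}^{(k+1)\times1\times n_3}$. T-$\ell_2$ norm of $\mathscr{Y}\in\mathbb{R}^{p\times1\times n_3}$: $\|\mathscr{Y}\|_{T_{\ell_2}}=\frac{1}{\sqrt{n_3}}\big(\sum_{k=1}^{n_3}\|\hat Y^{(k)}\|_2^2\big)^{1/2}$. *)

theory Defs
  imports Complex_Main
begin

text \<open>Real third-order tensors are represented as functions of three 0-based indices;
  dimensions are passed explicitly and only entries within the stated dimensions are ever used.
  A tube (element of R^{1 x 1 x n3}) is a tensor whose (0,0,l) entries are relevant.\<close>

type_synonym tensor = "nat \<Rightarrow> nat \<Rightarrow> nat \<Rightarrow> real"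

definition omega :: "nat \<Rightarrow> complex" where
  "omega n3 = cis (- 2 * pi / real n3)"

text \<open>Fourier slice: fslice n3 A t i j is entry (i,j) of the (t+1)-th frontal slice of A x_3 F_{n3}.\<close>
definition fslice :: "nat \<Rightarrow> tensor \<Rightarrow> nat \<Rightarrow> nat \<Rightarrow> nat \<Rightarrow> complex" where
  "fslice n3 A t i j = (\<Sum>l<n3. complex_of_real (A i j l) * omega n3 ^ (t * l))"

text \<open>Real tensor with prescribed Fourier slices F (inverse DFT along tubes; real part taken,
  which is exact for the conjugate-symmetric slice families arising below).\<close>
definition ifourier :: "nat \<Rightarrow> (nat \<Rightarrow> nat \<Rightarrow> nat \<Rightarrow> complex) \<Rightarrow> tensor" where
  "ifourier n3 F = (\<lambda>i j l. Re ((\<Sum>t<n3. F t i j * cnj (omega n3) ^ (t * l)) / of_nat n3))"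

definition tprod :: "nat \<Rightarrow> nat \<Rightarrow> tensor \<Rightarrow> tensor \<Rightarrow> tensor" where
  "tprod n3 m A B = ifourier n3 (\<lambda>t i j. \<Sum>p<m. fslice n3 A t i p * fslice n3 B t p j)"

definition ttrans :: "nat \<Rightarrow> tensor \<Rightarrow> tensor" where
  "ttrans n3 A = (\<lambda>i j l. if l = 0 then A j i 0 else A j i (n3 - l))"

definition tid :: tensor where
  "tid = (\<lambda>i j l. if l = 0 \<and> i = j then 1 else 0)"

definition tkron :: "nat \<Rightarrow> nat \<Rightarrow> nat \<Rightarrow> tensor \<Rightarrow> tensor \<Rightarrow> tensor" where
  "tkron n3 p2 q2 A B = ifourier n3 (\<lambda>t i j.
      fslice n3 A t (i div p2) (j div q2) * fslice n3 B t (i mod p2) (j mod q2))"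

definition frob :: "nat \<Rightarrow> nat \<Rightarrow> nat \<Rightarrow> tensor \<Rightarrow> real" where
  "frob p q n3 A = sqrt (\<Sum>i<p. \<Sum>j<q. \<Sum>l<n3. (A i j l)\<^sup>2)"

definition cfrob :: "nat \<Rightarrow> nat \<Rightarrow> (nat \<Rightarrow> nat \<Rightarrow> complex) \<Rightarrow> real" where
  "cfrob p q M = sqrt (\<Sum>i<p. \<Sum>j<q. (cmod (M i j))\<^sup>2)"

definition tscale :: "nat \<Rightarrow> tensor \<Rightarrow> tensor \<Rightarrow> tensor" where
  "tscale n3 a W = (\<lambda>i j l. tprod n3 1 (\<lambda>_ _. a 0 0) (\<lambda>_ _. W i j) 0 0 l)"

text \<open>Normalization of W (p x q x n3): None signals breakdown.\<close>
definition normalization :: "nat \<Rightarrow> nat \<Rightarrow> nat \<Rightarrow> tensor \<Rightarrow> (tensor \<times> tensor) option" where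
  "normalization p q n3 W =
     (if \<exists>t<n3. cfrob p q (fslice n3 W t) = 0 then None
      else Some (ifourier n3 (\<lambda>t i j. fslice n3 W t i j / complex_of_real (cfrob p q (fslice n3 W t))),
                 ifourier n3 (\<lambda>t i j. complex_of_real (cfrob p q (fslice n3 W t)))))"

text \<open>One Golub-Kahan step: state (U_j, a_j, V_{j-1}, b_{j-1}) to (U_{j+1}, a_{j+1}, V_j, b_j).\<close>
definition gk_step :: "nat \<Rightarrow> nat \<Rightarrow> nat \<Rightarrow> nat \<Rightarrow> tensor \<Rightarrow>
    tensor \<times> tensor \<times> tensor \<times> tensor \<Rightarrow> (tensor \<times> tensor \<times> tensor \<times> tensor) option" where
  "gk_step n1 n2 n3 s A st =
     (case st of (U, a, Vold, _) \<Rightarrow>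
       (case normalization n2 s n3 (\<lambda>i j l. tprod n3 n1 (ttrans n3 A) U i j l - tscale n3 a Vold i j l) of
          None \<Rightarrow> None
        | Some (V, b) \<Rightarrow>
           (case normalization n1 s n3 (\<lambda>i j l. tprod n3 n2 A V i j l - tscale n3 b U i j l) of
              None \<Rightarrow> None
            | Some (U', a') \<Rightarrow> Some (U', a', V, b))))"

text \<open>gk_state ... m = Some (U_{m+1}, a_{m+1}, V_m, b_m) (V_0 = 0, b_0 = 0 unused), or None on breakdown.\<close>
primrec gk_state :: "nat \<Rightarrow> nat \<Rightarrow> nat \<Rightarrow> nat \<Rightarrow> tensor \<Rightarrow> tensor \<Rightarrow> nat \<Rightarrow>
    (tensor \<times> tensor \<times> tensor \<times> tensor) option" where
  "gk_state n1 n2 n3 s A B 0 =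
     (case normalization n1 s n3 B of None \<Rightarrow> None
      | Some (U, a) \<Rightarrow> Some (U, a, (\<lambda>_ _ _. 0), (\<lambda>_ _ _. 0)))"
| "gk_state n1 n2 n3 s A B (Suc m) =
     (case gk_state n1 n2 n3 s A B m of None \<Rightarrow> None | Some st \<Rightarrow> gk_step n1 n2 n3 s A st)"

text \<open>Accessors (1-based indices as in the paper): U_j, a_j for j \<ge> 1, V_j, b_j for j \<ge> 1.\<close>
definition gkU :: "nat \<Rightarrow> nat \<Rightarrow> nat \<Rightarrow> nat \<Rightarrow> tensor \<Rightarrow> tensor \<Rightarrow> nat \<Rightarrow> tensor" where
  "gkU n1 n2 n3 s A B j = fst (the (gk_state n1 n2 n3 s A B (j - 1)))"
definition gka :: "nat \<Rightarrow> nat \<Rightarrow> nat \<Rightarrow> nat \<Rightarrow> tensor \<Rightarrow> tensor \<Rightarrow> nat \<Rightarrow> tensor" where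
  "gka n1 n2 n3 s A B j = fst (snd (the (gk_state n1 n2 n3 s A B (j - 1))))"
definition gkV :: "nat \<Rightarrow> nat \<Rightarrow> nat \<Rightarrow> nat \<Rightarrow> tensor \<Rightarrow> tensor \<Rightarrow> nat \<Rightarrow> tensor" where
  "gkV n1 n2 n3 s A B j = fst (snd (snd (the (gk_state n1 n2 n3 s A B j))))"
definition gkb :: "nat \<Rightarrow> nat \<Rightarrow> nat \<Rightarrow> nat \<Rightarrow> tensor \<Rightarrow> tensor \<Rightarrow> nat \<Rightarrow> tensor" where
  "gkb n1 n2 n3 s A B j = snd (snd (snd (the (gk_state n1 n2 n3 s A B j))))"

text \<open>\<bbbV>_k = [V_1, ..., V_k] (n2 x ks x n3).\<close>
definition gkVcat :: "nat \<Rightarrow> nat \<Rightarrow> nat \<Rightarrow> nat \<Rightarrow> tensor \<Rightarrow> tensor \<Rightarrow> tensor" where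
  "gkVcat n1 n2 n3 s A B = (\<lambda>i c l. gkV n1 n2 n3 s A B (c div s + 1) i (c mod s) l)"

text \<open>Bidiagonal (k+1) x k tensor C~_k (0-based: (j,j) tube b_{j+1}, (j+1,j) tube a_{j+2}).\<close>
definition gkC :: "nat \<Rightarrow> nat \<Rightarrow> nat \<Rightarrow> nat \<Rightarrow> tensor \<Rightarrow> tensor \<Rightarrow> nat \<Rightarrow> tensor" where
  "gkC n1 n2 n3 s A B k = (\<lambda>i j l.
     if j < k \<and> i = j then gkb n1 n2 n3 s A B (j + 1) 0 0 l
     else if j < k \<and> i = j + 1 then gka n1 n2 n3 s A B (j + 2) 0 0 l
     else 0)"

definition E1 :: tensor where
  "E1 = (\<lambda>i j l. if i = 0 \<and> l = 0 then 1 else 0)"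

definition tl2 :: "nat \<Rightarrow> nat \<Rightarrow> tensor \<Rightarrow> real" where
  "tl2 p n3 Y = sqrt (\<Sum>t<n3. \<Sum>i<p. (cmod (fslice n3 Y t i 0))\<^sup>2) / sqrt (real n3)"

end

theory Submission
  imports Defs
begin
lemma omega_pow: "omega n ^ m = cis (- 2 * pi * real m / real n)"
  by (simp add: omega_def DeMoivre field_simps)

lemma omega_pow_eq_1_iff:
  assumes "0 < n" shows "omega n ^ m = 1 \<longleftrightarrow> n dvd m"
proof
  assume h: "omega n ^ m = 1"
  hence "cos (- 2 * pi * real m / real n) = 1"
    by (simp add: omega_pow complex_eq_iff)
  hence "cos (2 * pi * real m / real n) = 1" by simp
  then obtain k :: int where k: "2 * pi * real m / real n = k * 2 * pi"
    by (auto simp: cos_one_2pi_int)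
  hence "pi * real m = pi * (real n * k)" using assms by (simp add: field_simps)
  hence "real m = real n * k" using pi_neq_zero by simp
  hence "int m = int n * k" by (metis of_int_eq_iff of_int_mult of_int_of_nat_eq)
  hence "int n dvd int m" by simp
  thus "n dvd m" by simp
next
  assume "n dvd m"
  then obtain c where "m = n * c" by auto
  have "cis (2 * pi * (- real c)) = 1" by (rule cis_multiple_2pi) simp
  thus "omega n ^ m = 1" using assms \<open>m = n * c\<close>
    by (simp add: omega_pow mult.assoc)
qed

lemma omega_pow_n: "0 < n \<Longrightarrow> omega n ^ n = 1"
  by (simp add: omega_pow_eq_1_iff)

lemma norm_omega_pow [simp]: "cmod (omega n ^ m) = 1"
  by (simp add: omega_def norm_power)

lemma omega_pow_mod: "0 < n \<Longrightarrow> omega n ^ m = omega n ^ (m mod n)"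
proof -
  assume n: "0 < n"
  have "omega n ^ m = omega n ^ (n * (m div n)) * omega n ^ (m mod n)"
    by (simp add: power_add[symmetric])
  also have "omega n ^ (n * (m div n)) = 1" by (simp add: power_mult omega_pow_n[OF n])
  finally show ?thesis by simp
qed

lemma omega_sum:
  assumes "0 < n"
  shows "(\<Sum>t<n. omega n ^ (t * m)) = (if n dvd m then of_nat n else 0)"
proof (cases "n dvd m")
  case True
  then obtain c where "m = n * c" by auto
  hence "\<And>t. omega n ^ (t * m) = 1"
    using omega_pow_eq_1_iff[OF assms] by auto
  thus ?thesis using True by simp
next
  case False
  hence ne: "omega n ^ m \<noteq> 1" using omega_pow_eq_1_iff[OF assms] by auto
  have "(\<Sum>t<n. omega n ^ (t * m)) = (\<Sum>t<n. (omega n ^ m) ^ t)"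
    by (intro sum.cong refl) (subst power_mult[symmetric], simp add: mult.commute)
  also have "\<dots> = ((omega n ^ m) ^ n - 1) / (omega n ^ m - 1)"
    using ne by (rule geometric_sum)
  also have "(omega n ^ m) ^ n = 1"
    by (metis omega_pow_n[OF assms] power_mult mult.commute power_one)
  finally show ?thesis using False by simp
qed

lemma omega_cnj:
  assumes "0 < n" "n dvd a + b"
  shows "omega n ^ a = cnj (omega n ^ b)"
proof -
  have ab: "omega n ^ a * omega n ^ b = 1"
    using assms omega_pow_eq_1_iff by (simp add: power_add[symmetric])
  have "omega n ^ b * cnj (omega n ^ b) = complex_of_real ((cmod (omega n ^ b))^2)"
    by (rule complex_norm_square[symmetric])
  hence c: "omega n ^ b * cnj (omega n ^ b) = 1" by simp
  have "omega n ^ a = omega n ^ a * (omega n ^ b * cnj (omega n ^ b))" using c by simp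
  also have "\<dots> = (omega n ^ a * omega n ^ b) * cnj (omega n ^ b)" by (simp add: mult.assoc)
  finally show ?thesis using ab by simp
qed

lemma cnj_omega_pow: "cnj (omega n) ^ m = cnj (omega n ^ m)"
  by simp

lemma dvd_rev: "(u::nat) < n \<Longrightarrow> n dvd ((n - u) mod n + u)"
  by (cases "u = 0") auto

lemma dvd_iff_eq:
  fixes a b n :: nat
  assumes "a < n" "b < n"
  shows "n dvd (a + b * (n - 1)) \<longleftrightarrow> a = b"
proof -
  obtain n' where nn: "n = Suc n'" using assms by (cases n) auto
  have e: "a + b * (n - 1) + b = a + b * n" unfolding nn by (simp add: algebra_simps)
  show ?thesis
  proof
    assume "n dvd (a + b * (n - 1))"
    hence "(a + b * (n - 1) + b) mod n = b mod n"
      by (metis dvd_imp_mod_0 mod_add_left_eq add_0)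
    hence "(a + b * n) mod n = b mod n" by (simp only: e)
    hence "a mod n = b mod n" by simp
    thus "a = b" using assms by simp
  next
    assume "a = b"
    hence "a + b * (n - 1) = b * n" unfolding nn by (simp add: algebra_simps)
    thus "n dvd (a + b * (n - 1))" by simp
  qed
qed

lemma cnj_omega_as_pow:
  assumes "0 < n"
  shows "cnj (omega n) ^ m = omega n ^ (m * (n - 1))"
proof -
  have "m * (n - 1) + m = m * n" using assms by (cases n) (simp_all add: algebra_simps)
  hence "n dvd m * (n - 1) + m" by simp
  thus ?thesis using omega_cnj[OF assms] by simp
qed

lemma omega_orth:
  assumes "0 < n" "a < n" "b < n"
  shows "(\<Sum>l<n. omega n ^ (a * l) * cnj (omega n) ^ (b * l)) = (if a = b then of_nat n else 0)"
proof -
  have "\<And>l. omega n ^ (a * l) * cnj (omega n) ^ (b * l) = omega n ^ (l * (a + b * (n - 1)))"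
    using cnj_omega_as_pow[OF assms(1)] by (simp add: power_add[symmetric] algebra_simps)
  hence "(\<Sum>l<n. omega n ^ (a * l) * cnj (omega n) ^ (b * l)) = (\<Sum>l<n. omega n ^ (l * (a + b * (n - 1))))"
    by simp
  also have "\<dots> = (if a = b then of_nat n else 0)"
    using omega_sum[OF assms(1)] dvd_iff_eq[OF assms(2,3)] by simp
  finally show ?thesis .
qed


definition csym :: "nat \<Rightarrow> (nat \<Rightarrow> nat \<Rightarrow> nat \<Rightarrow> complex) \<Rightarrow> bool" where
  "csym n F \<longleftrightarrow> (\<forall>t<n. \<forall>i j. F ((n - t) mod n) i j = cnj (F t i j))"

lemma rev_omega:
  assumes "0 < n" "u < n"
  shows "omega n ^ (((n - u) mod n) * l) = cnj (omega n ^ (u * l))"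
proof -
  have "n dvd ((n - u) mod n + u) * l" using dvd_rev[OF assms(2)] by simp
  hence "n dvd ((n - u) mod n) * l + u * l" by (simp add: algebra_simps)
  thus ?thesis using omega_cnj[OF assms(1)] by blast
qed

lemma fslice_csym:
  assumes "0 < n" "t < n"
  shows "fslice n A ((n - t) mod n) i j = cnj (fslice n A t i j)"
  unfolding fslice_def using rev_omega[OF assms] by (simp add: cnj_sum)

lemma fslice_csym': "0 < n \<Longrightarrow> csym n (fslice n A)"
  unfolding csym_def using fslice_csym by blast

lemma sum_rev:
  assumes "0 < (n::nat)"
  shows "(\<Sum>t<n. f ((n - t) mod n)) = (\<Sum>t<n. f t)"
proof -
  have rr: "(n - (n - b) mod n) mod n = b" if "b < n" for b
  proof (cases "b = 0")
    case False
    hence "(n - b) mod n = n - b" using that by simp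
    thus ?thesis using that by simp
  qed simp
  show ?thesis
    by (rule sum.reindex_bij_witness[where i="\<lambda>t. (n - t) mod n" and j="\<lambda>t. (n - t) mod n"])
       (use assms rr in auto)
qed

lemma fslice_ifourier:
  assumes n: "0 < n" and cs: "csym n F" and t: "t < n"
  shows "fslice n (ifourier n F) t i j = F t i j"
proof -
  define G where "G l = (\<Sum>u<n. F u i j * cnj (omega n) ^ (u * l)) / of_nat n" for l
  have cG: "cnj (G l) = G l" for l
  proof -
    have "cnj (G l) = (\<Sum>u<n. cnj (F u i j) * omega n ^ (u * l)) / of_nat n"
      unfolding G_def by (simp add: cnj_sum)
    also have "(\<Sum>u<n. cnj (F u i j) * omega n ^ (u * l))
         = (\<Sum>u<n. F ((n - u) mod n) i j * cnj (omega n ^ (((n - u) mod n) * l)))"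
      using cs unfolding csym_def by (intro sum.cong refl) (simp add: rev_omega[OF n])
    also have "\<dots> = (\<Sum>u<n. F u i j * cnj (omega n ^ (u * l)))"
      by (rule sum_rev[OF n, where f="\<lambda>u. F u i j * cnj (omega n ^ (u * l))"])
    finally show ?thesis unfolding G_def by simp
  qed
  have RG: "complex_of_real (Re (G l)) = G l" for l
    using cG by (metis Reals_cnj_iff of_real_Re)
  have "fslice n (ifourier n F) t i j = (\<Sum>l<n. G l * omega n ^ (t * l))"
    unfolding fslice_def ifourier_def G_def[symmetric] using RG by simp
  also have "\<dots> = (\<Sum>l<n. \<Sum>u<n. F u i j * (omega n ^ (t * l) * cnj (omega n) ^ (u * l)) / of_nat n)"
    unfolding G_def by (intro sum.cong refl) (simp add: sum_divide_distrib sum_distrib_right sum_distrib_left mult_ac)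
  also have "\<dots> = (\<Sum>u<n. F u i j * (\<Sum>l<n. omega n ^ (t * l) * cnj (omega n) ^ (u * l)) / of_nat n)"
    by (subst sum.swap) (simp add: sum_divide_distrib sum_distrib_left)
  also have "\<dots> = (\<Sum>u<n. if u = t then F t i j else 0)"
    using n t by (intro sum.cong refl) (auto simp: omega_orth)
  also have "\<dots> = F t i j" using t by simp
  finally show ?thesis .
qed

lemma omega_orth':
  assumes "0 < n" "a < n" "b < n"
  shows "(\<Sum>l<n. omega n ^ (l * a) * cnj (omega n) ^ (l * b)) = (if a = b then of_nat n else 0)"
  using omega_orth[OF assms] by (simp add: mult.commute)

lemma parseval:
  assumes n: "0 < n"
  shows "(\<Sum>t<n. (cmod (\<Sum>l<n. complex_of_real (x l) * omega n ^ (t * l)))^2) = real n * (\<Sum>l<n. (x l)^2)"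
proof -
  have "complex_of_real (\<Sum>t<n. (cmod (\<Sum>l<n. complex_of_real (x l) * omega n ^ (t * l)))^2)
      = (\<Sum>t<n. (\<Sum>l<n. complex_of_real (x l) * omega n ^ (t * l)) * cnj (\<Sum>l<n. complex_of_real (x l) * omega n ^ (t * l)))"
    by (simp only: of_real_sum complex_norm_square)
  also have "\<dots> = (\<Sum>t<n. \<Sum>l<n. \<Sum>l'<n. complex_of_real (x l * x l') * (omega n ^ (t * l') * cnj (omega n) ^ (t * l)))"
    by (simp add: cnj_sum sum_distrib_left sum_distrib_right mult_ac)
  also have "\<dots> = (\<Sum>l<n. \<Sum>t<n. \<Sum>l'<n. complex_of_real (x l * x l') * (omega n ^ (t * l') * cnj (omega n) ^ (t * l)))"
    by (rule sum.swap)
  also have "\<dots> = (\<Sum>l<n. \<Sum>l'<n. \<Sum>t<n. complex_of_real (x l * x l') * (omega n ^ (t * l') * cnj (omega n) ^ (t * l)))"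
    by (rule sum.cong[OF refl], rule sum.swap)
  also have "\<dots> = (\<Sum>l<n. \<Sum>l'<n. complex_of_real (x l * x l') * (\<Sum>t<n. omega n ^ (t * l') * cnj (omega n) ^ (t * l)))"
    by (simp only: sum_distrib_left)
  also have "\<dots> = (\<Sum>l<n. \<Sum>l'<n. if l' = l then complex_of_real (x l * x l) * of_nat n else 0)"
    using n by (intro sum.cong refl) (auto simp: omega_orth')
  also have "\<dots> = complex_of_real (real n * (\<Sum>l<n. (x l)^2))"
    by (simp add: sum_distrib_left power2_eq_square algebra_simps)
  finally have "complex_of_real (\<Sum>t<n. (cmod (\<Sum>l<n. complex_of_real (x l) * omega n ^ (t * l)))^2) = complex_of_real (real n * (\<Sum>l<n. (x l)^2))" .
  thus ?thesis by (simp only: of_real_eq_iff)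
qed

lemma fslice_tprod:
  assumes n: "0 < n" and t: "t < n"
  shows "fslice n (tprod n m A B) t i j = (\<Sum>p<m. fslice n A t i p * fslice n B t p j)"
proof -
  have "csym n (\<lambda>t i j. \<Sum>p<m. fslice n A t i p * fslice n B t p j)"
    unfolding csym_def using n by (simp add: fslice_csym cnj_sum)
  thus ?thesis unfolding tprod_def using fslice_ifourier[OF n _ t] by blast
qed

lemma fslice_diff:
  "fslice n (\<lambda>i j l. X i j l - Y i j l) t i j = fslice n X t i j - fslice n Y t i j"
  unfolding fslice_def by (simp add: sum_subtractf algebra_simps)

lemma fslice_ttrans:
  assumes n: "0 < n" and t: "t < n"
  shows "fslice n (ttrans n A) t i j = cnj (fslice n A t j i)"
proof -
  have "fslice n (ttrans n A) t i j = (\<Sum>l<n. complex_of_real (A j i ((n - l) mod n)) * omega n ^ (t * l))"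
    unfolding fslice_def ttrans_def by (intro sum.cong refl) auto
  also have "\<dots> = (\<Sum>l<n. complex_of_real (A j i ((n - l) mod n)) * cnj (omega n ^ (t * ((n - l) mod n))))"
  proof (intro sum.cong refl)
    fix l assume "l \<in> {..<n}"
    hence "n dvd (t * ((n - l) mod n) + t * l)"
      using dvd_rev[of l n] by (simp add: add_mult_distrib2[symmetric])
    hence "omega n ^ (t * l) = cnj (omega n ^ (t * ((n - l) mod n)))"
      using omega_cnj[OF n] by (metis add.commute)
    thus "complex_of_real (A j i ((n - l) mod n)) * omega n ^ (t * l) =
      complex_of_real (A j i ((n - l) mod n)) * cnj (omega n ^ (t * ((n - l) mod n)))" by simp
  qed
  also have "\<dots> = (\<Sum>l<n. complex_of_real (A j i l) * cnj (omega n ^ (t * l)))"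
    by (rule sum_rev[OF n, where f="\<lambda>l. complex_of_real (A j i l) * cnj (omega n ^ (t * l))"])
  also have "\<dots> = cnj (fslice n A t j i)"
    unfolding fslice_def by (simp add: cnj_sum)
  finally show ?thesis .
qed

lemma fslice_tid:
  assumes n: "0 < n"
  shows "fslice n tid t i j = (if i = j then 1 else 0)"
proof -
  have "fslice n tid t i j = (\<Sum>l<n. if l = 0 then (if i = j then 1 else 0) else 0)"
    unfolding fslice_def tid_def by (intro sum.cong refl) auto
  also have "\<dots> = (if i = j then 1 else 0)" using n by (simp add: sum.delta)
  finally show ?thesis .
qed

lemma fslice_E1:
  assumes n: "0 < n"
  shows "fslice n E1 t i j = (if i = 0 then 1 else 0)"
proof -
  have "fslice n E1 t i j = (\<Sum>l<n. if l = 0 then (if i = 0 then 1 else 0) else 0)"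
    unfolding fslice_def E1_def by (intro sum.cong refl) auto
  also have "\<dots> = (if i = 0 then 1 else 0)" using n by (simp add: sum.delta)
  finally show ?thesis .
qed

lemma fslice_tscale:
  assumes n: "0 < n" and t: "t < n"
  shows "fslice n (tscale n a W) t i j = fslice n a t 0 0 * fslice n W t i j"
proof -
  have "fslice n (tscale n a W) t i j = fslice n (tprod n 1 (\<lambda>_ _. a 0 0) (\<lambda>_ _. W i j)) t 0 0"
    unfolding fslice_def tscale_def by simp
  also have "\<dots> = fslice n a t 0 0 * fslice n W t i j"
    by (simp add: fslice_tprod[OF n t]) (simp add: fslice_def)
  finally show ?thesis .
qed

lemma fslice_tkron:
  assumes n: "0 < n" and t: "t < n"
  shows "fslice n (tkron n p2 q2 A B) t i j =
     fslice n A t (i div p2) (j div q2) * fslice n B t (i mod p2) (j mod q2)"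
proof -
  have "csym n (\<lambda>t i j. fslice n A t (i div p2) (j div q2) * fslice n B t (i mod p2) (j mod q2))"
    unfolding csym_def using n by (simp add: fslice_csym)
  thus ?thesis unfolding tkron_def using fslice_ifourier[OF n _ t] by blast
qed

lemma cfrob_cnj: "cfrob p q (\<lambda>i j. cnj (M i j)) = cfrob p q M"
  unfolding cfrob_def by simp

lemma normalization_Some:
  assumes n: "0 < n" and t: "t < n" and h: "normalization p q n W = Some (Q, a)"
  shows "cfrob p q (fslice n W t) \<noteq> 0"
    and "fslice n Q t i j = fslice n W t i j / complex_of_real (cfrob p q (fslice n W t))"
    and "fslice n a t i j = complex_of_real (cfrob p q (fslice n W t))"
proof -
  have ne: "\<not> (\<exists>t<n. cfrob p q (fslice n W t) = 0)"
    using h unfolding normalization_def by (auto split: if_splits)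
  hence Q: "Q = ifourier n (\<lambda>t i j. fslice n W t i j / complex_of_real (cfrob p q (fslice n W t)))"
    and a: "a = ifourier n (\<lambda>t i j. complex_of_real (cfrob p q (fslice n W t)))"
    using h unfolding normalization_def if_not_P[OF ne] by auto
  have cf: "cfrob p q (fslice n W ((n - t') mod n)) = cfrob p q (fslice n W t')" if "t' < n" for t'
  proof -
    have "fslice n W ((n - t') mod n) = (\<lambda>i j. cnj (fslice n W t' i j))"
      using fslice_csym[OF n that] by (intro ext) simp
    thus ?thesis by (simp add: cfrob_cnj)
  qed
  show "cfrob p q (fslice n W t) \<noteq> 0" using ne t by blast
  have "csym n (\<lambda>t i j. fslice n W t i j / complex_of_real (cfrob p q (fslice n W t)))"
    unfolding csym_def using n cf by (simp add: fslice_csym)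
  thus "fslice n Q t i j = fslice n W t i j / complex_of_real (cfrob p q (fslice n W t))"
    unfolding Q using fslice_ifourier[OF n _ t] by blast
  have "csym n (\<lambda>t i j. complex_of_real (cfrob p q (fslice n W t)))"
    unfolding csym_def using n cf by simp
  thus "fslice n a t i j = complex_of_real (cfrob p q (fslice n W t))"
    unfolding a using fslice_ifourier[OF n _ t] by blast
qed

lemma gk_state_mono:
  "gk_state n1 n2 n3 s A B (Suc m) \<noteq> None \<Longrightarrow> gk_state n1 n2 n3 s A B m \<noteq> None"
  by (auto split: option.splits)

lemma gk_state_le:
  "gk_state n1 n2 n3 s A B k \<noteq> None \<Longrightarrow> m \<le> k \<Longrightarrow> gk_state n1 n2 n3 s A B m \<noteq> None"
proof (induction k)
  case 0 thus ?case by simp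
next
  case (Suc k)
  show ?case
  proof (cases "m = Suc k")
    case False
    thus ?thesis using Suc gk_state_mono[of n1 n2 n3 s A B k] by simp
  qed (use Suc in simp)
qed

lemma gk_base:
  assumes "gk_state n1 n2 n3 s A B 0 \<noteq> None"
  shows "normalization n1 s n3 B = Some (gkU n1 n2 n3 s A B 1, gka n1 n2 n3 s A B 1)"
    and "gkV n1 n2 n3 s A B 0 = (\<lambda>_ _ _. 0)"
  using assms unfolding gkU_def gka_def gkV_def by (auto split: option.splits)

lemma gk_step':
  assumes "gk_state n1 n2 n3 s A B (Suc m) \<noteq> None"
  shows "normalization n2 s n3 (\<lambda>i j l. tprod n3 n1 (ttrans n3 A) (gkU n1 n2 n3 s A B (Suc m)) i j l
            - tscale n3 (gka n1 n2 n3 s A B (Suc m)) (gkV n1 n2 n3 s A B m) i j l)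
          = Some (gkV n1 n2 n3 s A B (Suc m), gkb n1 n2 n3 s A B (Suc m))"
    and "normalization n1 s n3 (\<lambda>i j l. tprod n3 n2 A (gkV n1 n2 n3 s A B (Suc m)) i j l
            - tscale n3 (gkb n1 n2 n3 s A B (Suc m)) (gkU n1 n2 n3 s A B (Suc m)) i j l)
          = Some (gkU n1 n2 n3 s A B (Suc (Suc m)), gka n1 n2 n3 s A B (Suc (Suc m)))"
proof -
  obtain U a V b where st: "gk_state n1 n2 n3 s A B m = Some (U, a, V, b)"
    using gk_state_mono[OF assms] by (metis not_None_eq prod_cases4)
  have U: "gkU n1 n2 n3 s A B (Suc m) = U" and a: "gka n1 n2 n3 s A B (Suc m) = a"
    and V: "gkV n1 n2 n3 s A B m = V"
    using st unfolding gkU_def gka_def gkV_def by simp_all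
  have ss: "gk_state n1 n2 n3 s A B (Suc m) = gk_step n1 n2 n3 s A (U, a, V, b)"
    using st by simp
  show "normalization n2 s n3 (\<lambda>i j l. tprod n3 n1 (ttrans n3 A) (gkU n1 n2 n3 s A B (Suc m)) i j l
            - tscale n3 (gka n1 n2 n3 s A B (Suc m)) (gkV n1 n2 n3 s A B m) i j l)
          = Some (gkV n1 n2 n3 s A B (Suc m), gkb n1 n2 n3 s A B (Suc m))"
    using assms unfolding U a V unfolding gkV_def gkb_def ss gk_step_def
    by (auto split: option.splits)
  show "normalization n1 s n3 (\<lambda>i j l. tprod n3 n2 A (gkV n1 n2 n3 s A B (Suc m)) i j l
            - tscale n3 (gkb n1 n2 n3 s A B (Suc m)) (gkU n1 n2 n3 s A B (Suc m)) i j l)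
          = Some (gkU n1 n2 n3 s A B (Suc (Suc m)), gka n1 n2 n3 s A B (Suc (Suc m)))"
    using assms unfolding U unfolding gkV_def gkb_def gkU_def gka_def diff_Suc_1 ss gk_step_def
    by (auto split: option.splits)
qed

definition ip :: "nat \<Rightarrow> nat \<Rightarrow> (nat \<Rightarrow> nat \<Rightarrow> complex) \<Rightarrow> (nat \<Rightarrow> nat \<Rightarrow> complex) \<Rightarrow> complex" where
  "ip p q X Y = (\<Sum>i<p. \<Sum>j<q. cnj (X i j) * Y i j)"

definition mmul :: "nat \<Rightarrow> (nat \<Rightarrow> nat \<Rightarrow> complex) \<Rightarrow> (nat \<Rightarrow> nat \<Rightarrow> complex) \<Rightarrow> nat \<Rightarrow> nat \<Rightarrow> complex" where
  "mmul m M X = (\<lambda>i j. \<Sum>p<m. M i p * X p j)"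

definition adj :: "(nat \<Rightarrow> nat \<Rightarrow> complex) \<Rightarrow> nat \<Rightarrow> nat \<Rightarrow> complex" where
  "adj M = (\<lambda>i j. cnj (M j i))"

lemma adj_adj [simp]: "adj (adj M) = M"
  unfolding adj_def by simp

lemma ip_cnj: "cnj (ip p q X Y) = ip p q Y X"
  unfolding ip_def by (simp add: cnj_sum mult.commute)

lemma ip_diff_right: "ip p q X (\<lambda>i j. Y i j - Z i j) = ip p q X Y - ip p q X Z"
  unfolding ip_def by (simp add: sum_subtractf algebra_simps)

lemma ip_add_left: "ip p q (\<lambda>i j. X i j + Y i j) Z = ip p q X Z + ip p q Y Z"
  unfolding ip_def by (simp add: sum.distrib algebra_simps)

lemma ip_scale_right: "ip p q X (\<lambda>i j. c * Y i j) = c * ip p q X Y"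
  unfolding ip_def by (simp add: sum_distrib_left algebra_simps)

lemma ip_scale_left: "ip p q (\<lambda>i j. c * X i j) Y = cnj c * ip p q X Y"
  unfolding ip_def by (simp add: sum_distrib_left algebra_simps)

lemma ip_zero_left: "ip p q (\<lambda>i j. 0) Y = 0"
  unfolding ip_def by simp

lemma ip_adj: "ip n2 q X (mmul n1 (adj M) Y) = ip n1 q (mmul n2 M X) Y"
proof -
  have "ip n2 q X (mmul n1 (adj M) Y) = (\<Sum>i<n2. \<Sum>j<q. \<Sum>p<n1. cnj (X i j) * cnj (M p i) * Y p j)"
    unfolding ip_def mmul_def adj_def by (simp add: sum_distrib_left mult.assoc)
  also have "\<dots> = (\<Sum>i<n2. \<Sum>p<n1. \<Sum>j<q. cnj (X i j) * cnj (M p i) * Y p j)"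
    by (rule sum.cong[OF refl], rule sum.swap)
  also have "\<dots> = (\<Sum>p<n1. \<Sum>i<n2. \<Sum>j<q. cnj (X i j) * cnj (M p i) * Y p j)"
    by (rule sum.swap)
  also have "\<dots> = (\<Sum>p<n1. \<Sum>j<q. \<Sum>i<n2. cnj (X i j) * cnj (M p i) * Y p j)"
    by (rule sum.cong[OF refl], rule sum.swap)
  also have "\<dots> = ip n1 q (mmul n2 M X) Y"
    unfolding ip_def mmul_def by (simp add: cnj_sum sum_distrib_right sum_distrib_left mult_ac)
  finally show ?thesis .
qed

lemma ip_self: "ip p q W W = complex_of_real ((cfrob p q W)^2)"
proof -
  have "(cfrob p q W)^2 = (\<Sum>i<p. \<Sum>j<q. (cmod (W i j))^2)"
    unfolding cfrob_def by (simp add: sum_nonneg)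
  hence "complex_of_real ((cfrob p q W)^2) = (\<Sum>i<p. \<Sum>j<q. complex_of_real ((cmod (W i j))^2))"
    by (simp only: of_real_sum)
  also have "\<dots> = ip p q W W" unfolding ip_def complex_norm_square by (simp add: mult.commute)
  finally show ?thesis by simp
qed

lemma ip_normalized:
  assumes "cfrob p q W \<noteq> 0"
  shows "ip p q (\<lambda>i j. W i j / complex_of_real (cfrob p q W)) (\<lambda>i j. W i j / complex_of_real (cfrob p q W)) = 1"
proof -
  let ?c = "complex_of_real (cfrob p q W)"
  have "ip p q (\<lambda>i j. inverse ?c * W i j) (\<lambda>i j. inverse ?c * W i j) = cnj (inverse ?c) * inverse ?c * ip p q W W"
    by (simp add: ip_scale_left ip_scale_right)
  also have "\<dots> = 1" using assms by (simp add: ip_self power2_eq_square field_simps)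
  finally show ?thesis by (simp add: divide_inverse mult.commute)
qed

locale lanczos =
  fixes n1 n2 q k :: nat and M :: "nat \<Rightarrow> nat \<Rightarrow> complex"
    and U V :: "nat \<Rightarrow> nat \<Rightarrow> nat \<Rightarrow> complex" and \<alpha> \<beta> :: "nat \<Rightarrow> real"
  assumes V0: "\<And>i j. V 0 i j = 0"
    and U1: "ip n1 q (U 1) (U 1) = 1"
    and Vrec: "\<And>m i j. m < k \<Longrightarrow> complex_of_real (\<beta> (Suc m)) * V (Suc m) i j
                 = mmul n1 (adj M) (U (Suc m)) i j - complex_of_real (\<alpha> (Suc m)) * V m i j"
    and Vunit: "\<And>m. m < k \<Longrightarrow> ip n2 q (V (Suc m)) (V (Suc m)) = 1"
    and Urec: "\<And>m i j. m < k \<Longrightarrow> complex_of_real (\<alpha> (Suc (Suc m))) * U (Suc (Suc m)) i j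
                 = mmul n2 M (V (Suc m)) i j - complex_of_real (\<beta> (Suc m)) * U (Suc m) i j"
    and Uunit: "\<And>m. m < k \<Longrightarrow> ip n1 q (U (Suc (Suc m))) (U (Suc (Suc m))) = 1"
    and anz: "\<And>m. m < k \<Longrightarrow> \<alpha> (Suc (Suc m)) \<noteq> 0"
    and bnz: "\<And>m. m < k \<Longrightarrow> \<beta> (Suc m) \<noteq> 0"
begin

lemma MV: "1 \<le> i \<Longrightarrow> i \<le> k \<Longrightarrow> mmul n2 M (V i)
   = (\<lambda>a b. complex_of_real (\<alpha> (Suc i)) * U (Suc i) a b + complex_of_real (\<beta> i) * U i a b)"
  using Urec[of "i - 1"] by (intro ext) (simp add: algebra_simps)

lemma MhU: "1 \<le> i \<Longrightarrow> i \<le> k \<Longrightarrow> mmul n1 (adj M) (U i)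
   = (\<lambda>a b. complex_of_real (\<beta> i) * V i a b + complex_of_real (\<alpha> i) * V (i - 1) a b)"
  using Vrec[of "i - 1"] by (intro ext) (simp add: algebra_simps)

definition orthU :: "nat \<Rightarrow> bool" where
  "orthU m \<longleftrightarrow> (\<forall>i j. 1 \<le> i \<longrightarrow> i \<le> m \<longrightarrow> 1 \<le> j \<longrightarrow> j \<le> m \<longrightarrow> ip n1 q (U i) (U j) = (if i = j then 1 else 0))"

definition orthV :: "nat \<Rightarrow> bool" where
  "orthV m \<longleftrightarrow> (\<forall>i j. 1 \<le> i \<longrightarrow> i \<le> m \<longrightarrow> 1 \<le> j \<longrightarrow> j \<le> m \<longrightarrow> ip n2 q (V i) (V j) = (if i = j then 1 else 0))"

lemma extend:
  assumes "orthU m" "1 \<le> m" "\<And>i. 1 \<le> i \<Longrightarrow> i < m \<Longrightarrow> ip n1 q (U i) (U m) = 0" "ip n1 q (U m) (U m) = 1"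
  shows "orthU m"
  using assms by simp

lemma orth_step:
  assumes m: "Suc m \<le> k" and oU: "orthU (Suc m)" and oV: "orthV m"
  shows "orthV (Suc m) \<and> orthU (Suc (Suc m))"
proof -
  have mk: "m < k" using m by simp
  have Vi0: "ip n2 q (V i) (V (Suc m)) = 0" if i: "1 \<le> i" "i \<le> m" for i
  proof -
    have "complex_of_real (\<beta> (Suc m)) * ip n2 q (V i) (V (Suc m))
        = ip n2 q (V i) (\<lambda>a b. complex_of_real (\<beta> (Suc m)) * V (Suc m) a b)"
      by (simp add: ip_scale_right)
    also have "\<dots> = ip n2 q (V i) (\<lambda>a b. mmul n1 (adj M) (U (Suc m)) a b - complex_of_real (\<alpha> (Suc m)) * V m a b)"
      using Vrec[OF mk] by simp
    also have "\<dots> = ip n1 q (mmul n2 M (V i)) (U (Suc m)) - complex_of_real (\<alpha> (Suc m)) * ip n2 q (V i) (V m)"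
      by (simp add: ip_diff_right ip_scale_right ip_adj)
    also have "ip n1 q (mmul n2 M (V i)) (U (Suc m))
        = complex_of_real (\<alpha> (Suc i)) * ip n1 q (U (Suc i)) (U (Suc m)) + complex_of_real (\<beta> i) * ip n1 q (U i) (U (Suc m))"
      using i m by (simp add: MV ip_add_left ip_scale_left)
    also have "\<dots> = (if i = m then complex_of_real (\<alpha> (Suc m)) else 0)"
      using oU i unfolding orthU_def by simp
    also have "ip n2 q (V i) (V m) = (if i = m then 1 else 0)"
      using oV i unfolding orthV_def by simp
    finally have "complex_of_real (\<beta> (Suc m)) * ip n2 q (V i) (V (Suc m)) = 0" by simp
    thus ?thesis using bnz[OF mk] by simp
  qed
  have oV': "orthV (Suc m)"
    unfolding orthV_def
  proof (intro allI impI)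
    fix i j assume h: "1 \<le> i" "i \<le> Suc m" "1 \<le> j" "j \<le> Suc m"
    show "ip n2 q (V i) (V j) = (if i = j then 1 else 0)"
    proof (cases "i = Suc m")
      case True
      show ?thesis
      proof (cases "j = Suc m")
        case False
        hence "ip n2 q (V j) (V i) = 0" using Vi0[of j] h True by simp
        hence "cnj (ip n2 q (V j) (V i)) = 0" by simp
        thus ?thesis using True False by (simp add: ip_cnj)
      qed (use True Vunit[OF mk] in simp)
    next
      case False
      show ?thesis
      proof (cases "j = Suc m")
        case True
        thus ?thesis using Vi0[of i] h False by simp
      qed (use False oV h in \<open>simp add: orthV_def\<close>)
    qed
  qed
  have Ui0: "ip n1 q (U i) (U (Suc (Suc m))) = 0" if i: "1 \<le> i" "i \<le> Suc m" for i
  proof -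
    have "complex_of_real (\<alpha> (Suc (Suc m))) * ip n1 q (U i) (U (Suc (Suc m)))
        = ip n1 q (U i) (\<lambda>a b. complex_of_real (\<alpha> (Suc (Suc m))) * U (Suc (Suc m)) a b)"
      by (simp add: ip_scale_right)
    also have "\<dots> = ip n1 q (U i) (\<lambda>a b. mmul n2 M (V (Suc m)) a b - complex_of_real (\<beta> (Suc m)) * U (Suc m) a b)"
      using Urec[OF mk] by simp
    also have "\<dots> = ip n2 q (mmul n1 (adj M) (U i)) (V (Suc m)) - complex_of_real (\<beta> (Suc m)) * ip n1 q (U i) (U (Suc m))"
      using ip_adj[of n1 q "U i" n2 "adj M" "V (Suc m)"]
      by (simp add: ip_diff_right ip_scale_right)
    also have "ip n2 q (mmul n1 (adj M) (U i)) (V (Suc m))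
        = complex_of_real (\<beta> i) * ip n2 q (V i) (V (Suc m)) + complex_of_real (\<alpha> i) * ip n2 q (V (i - 1)) (V (Suc m))"
      using i m by (simp add: MhU ip_add_left ip_scale_left)
    also have "ip n2 q (V (i - 1)) (V (Suc m)) = 0"
    proof (cases "i = 1")
      case True
      have "V 0 = (\<lambda>a b. 0)" using V0 by (intro ext) simp
      thus ?thesis using True by (simp add: ip_zero_left)
    next
      case False
      thus ?thesis using oV' i unfolding orthV_def by simp
    qed
    also have "ip n2 q (V i) (V (Suc m)) = (if i = Suc m then 1 else 0)"
      using oV' i unfolding orthV_def by simp
    also have "ip n1 q (U i) (U (Suc m)) = (if i = Suc m then 1 else 0)"
      using oU i unfolding orthU_def by simp
    finally have "complex_of_real (\<alpha> (Suc (Suc m))) * ip n1 q (U i) (U (Suc (Suc m))) = 0" by simp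
    thus ?thesis using anz[OF mk] by simp
  qed
  have oU': "orthU (Suc (Suc m))"
    unfolding orthU_def
  proof (intro allI impI)
    fix i j assume h: "1 \<le> i" "i \<le> Suc (Suc m)" "1 \<le> j" "j \<le> Suc (Suc m)"
    show "ip n1 q (U i) (U j) = (if i = j then 1 else 0)"
    proof (cases "i = Suc (Suc m)")
      case True
      show ?thesis
      proof (cases "j = Suc (Suc m)")
        case False
        hence "ip n1 q (U j) (U i) = 0" using Ui0[of j] h True by simp
        hence "cnj (ip n1 q (U j) (U i)) = 0" by simp
        thus ?thesis using True False by (simp add: ip_cnj)
      qed (use True Uunit[OF mk] in simp)
    next
      case False
      show ?thesis
      proof (cases "j = Suc (Suc m)")
        case True
        thus ?thesis using Ui0[of i] h False by simp
      qed (use False oU h in \<open>simp add: orthU_def\<close>)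
    qed
  qed
  show ?thesis using oV' oU' by simp
qed

lemma orth: "m \<le> k \<Longrightarrow> orthU (Suc m) \<and> orthV m"
proof (induction m)
  case 0
  show ?case using U1 unfolding orthU_def orthV_def
    by (auto simp: le_Suc_eq)
next
  case (Suc m)
  thus ?case using orth_step[of m] by simp
qed

end

lemma sum_div_mod:
  fixes s k :: nat
  shows "(\<Sum>c<k * s. g c) = (\<Sum>q<k. \<Sum>r<s. g (q * s + r))"
proof -
  have "(\<Sum>c<k * s. g c) = (\<Sum>q<k. \<Sum>c\<in>{q * s..<q * s + s}. g c)"
    by (rule sum.nat_group[symmetric])
  also have "\<dots> = (\<Sum>q<k. \<Sum>r<s. g (q * s + r))"
    by (rule sum.cong[OF refl], subst sum.atLeastLessThan_shift_0, simp add: atLeast0LessThan)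
  finally show ?thesis .
qed

lemma ip_sum_left: "ip p q (\<lambda>a b. \<Sum>i\<in>I. f i a b) Y = (\<Sum>i\<in>I. ip p q (f i) Y)"
proof -
  have "ip p q (\<lambda>a b. \<Sum>i\<in>I. f i a b) Y = (\<Sum>a<p. \<Sum>b<q. \<Sum>i\<in>I. cnj (f i a b) * Y a b)"
    unfolding ip_def by (simp add: cnj_sum sum_distrib_right)
  also have "\<dots> = (\<Sum>a<p. \<Sum>i\<in>I. \<Sum>b<q. cnj (f i a b) * Y a b)"
    by (rule sum.cong[OF refl], rule sum.swap)
  also have "\<dots> = (\<Sum>i\<in>I. \<Sum>a<p. \<Sum>b<q. cnj (f i a b) * Y a b)"
    by (rule sum.swap)
  finally show ?thesis unfolding ip_def .
qed

lemma ip_sum_right: "ip p q X (\<lambda>a b. \<Sum>i\<in>I. f i a b) = (\<Sum>i\<in>I. ip p q X (f i))"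
proof -
  have "cnj (ip p q X (\<lambda>a b. \<Sum>i\<in>I. f i a b)) = cnj (\<Sum>i\<in>I. ip p q X (f i))"
    by (simp add: ip_cnj ip_sum_left cnj_sum)
  thus ?thesis by (simp only: complex_cnj_cancel_iff)
qed

lemma ip_cong:
  assumes "\<And>a b. a < p \<Longrightarrow> b < q \<Longrightarrow> X a b = X' a b"
  shows "ip p q X X = ip p q X' X'"
  unfolding ip_def using assms by (intro sum.cong refl) simp

lemma ip_expand:
  fixes N :: nat
  assumes orth: "\<And>i j. i < N \<Longrightarrow> j < N \<Longrightarrow> ip p q (U i) (U j) = (if i = j then 1 else 0)"
  shows "ip p q (\<lambda>a b. \<Sum>i<N. r i * U i a b) (\<lambda>a b. \<Sum>i<N. r i * U i a b) = (\<Sum>i<N. cnj (r i) * r i)"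
proof -
  have "ip p q (\<lambda>a b. \<Sum>i<N. r i * U i a b) (\<lambda>a b. \<Sum>i<N. r i * U i a b)
      = (\<Sum>i<N. \<Sum>j<N. cnj (r i) * r j * ip p q (U i) (U j))"
    by (simp add: ip_sum_left ip_sum_right ip_scale_left ip_scale_right mult_ac)
  also have "\<dots> = (\<Sum>i<N. \<Sum>j<N. if j = i then cnj (r i) * r i else 0)"
    using orth by (intro sum.cong refl) auto
  also have "\<dots> = (\<Sum>i<N. cnj (r i) * r i)" by (rule sum.cong[OF refl]) simp
  finally show ?thesis .
qed

lemma norm_tube:
  assumes n: "0 < n" and t: "t < n" and h: "normalization p q n W = Some (Q, a)"
  shows "fslice n a t i j = complex_of_real (Re (fslice n a t 0 0))"
    and "Re (fslice n a t 0 0) = cfrob p q (fslice n W t)"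
    and "Re (fslice n a t 0 0) \<noteq> 0"
    and "fslice n Q t i j = fslice n W t i j / complex_of_real (Re (fslice n a t 0 0))"
  using normalization_Some[OF n t h] by simp_all

lemma fslice_zero: "fslice n (\<lambda>_ _ _. 0) t i j = 0"
  unfolding fslice_def by simp

lemma fslice_tprod_adj:
  assumes n: "0 < n" and t: "t < n"
  shows "fslice n (tprod n m (ttrans n A) X) t i j = mmul m (adj (fslice n A t)) (fslice n X t) i j"
  unfolding mmul_def adj_def by (simp add: fslice_tprod[OF n t] fslice_ttrans[OF n t])

lemma fslice_tprod_mmul:
  assumes n: "0 < n" and t: "t < n"
  shows "fslice n (tprod n m A X) t i j = mmul m (fslice n A t) (fslice n X t) i j"
  unfolding mmul_def by (simp add: fslice_tprod[OF n t])

locale gkslice =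
  fixes n1 n2 n3 s k :: nat and A B :: tensor and t :: nat
  assumes n3: "0 < n3" and t: "t < n3" and nb: "gk_state n1 n2 n3 s A B k \<noteq> None"
begin

abbreviation "Uh j \<equiv> fslice n3 (gkU n1 n2 n3 s A B j) t"
abbreviation "Vh j \<equiv> fslice n3 (gkV n1 n2 n3 s A B j) t"
abbreviation "al j \<equiv> Re (fslice n3 (gka n1 n2 n3 s A B j) t 0 0)"
abbreviation "be j \<equiv> Re (fslice n3 (gkb n1 n2 n3 s A B j) t 0 0)"
abbreviation "Ah \<equiv> fslice n3 A t"

definition WV :: "nat \<Rightarrow> nat \<Rightarrow> nat \<Rightarrow> complex" where
  "WV m = (\<lambda>i j. mmul n1 (adj Ah) (Uh (Suc m)) i j - fslice n3 (gka n1 n2 n3 s A B (Suc m)) t 0 0 * Vh m i j)"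

definition WU :: "nat \<Rightarrow> nat \<Rightarrow> nat \<Rightarrow> complex" where
  "WU m = (\<lambda>i j. mmul n2 Ah (Vh (Suc m)) i j - fslice n3 (gkb n1 n2 n3 s A B (Suc m)) t 0 0 * Uh (Suc m) i j)"

lemma st_le: "m \<le> k \<Longrightarrow> gk_state n1 n2 n3 s A B m \<noteq> None"
  using gk_state_le[OF nb] by blast

lemma base:
  shows "fslice n3 (gka n1 n2 n3 s A B 1) t i j = complex_of_real (al 1)"
    and "al 1 = cfrob n1 s (fslice n3 B t)"
    and "al 1 \<noteq> 0"
    and "Uh 1 i j = fslice n3 B t i j / complex_of_real (al 1)"
proof -
  have h0: "gk_state n1 n2 n3 s A B 0 \<noteq> None" by (rule st_le) simp
  note nt = norm_tube[OF n3 t gk_base(1)[OF h0]]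
  show "fslice n3 (gka n1 n2 n3 s A B 1) t i j = complex_of_real (al 1)" by (rule nt(1))
  show "al 1 = cfrob n1 s (fslice n3 B t)" by (rule nt(2))
  show "al 1 \<noteq> 0" by (rule nt(3))
  show "Uh 1 i j = fslice n3 B t i j / complex_of_real (al 1)" by (rule nt(4))
qed

lemma stepV:
  assumes m: "m < k"
  shows "fslice n3 (gkb n1 n2 n3 s A B (Suc m)) t i j = complex_of_real (be (Suc m))"
    and "be (Suc m) = cfrob n2 s (WV m)"
    and "be (Suc m) \<noteq> 0"
    and "Vh (Suc m) i j = WV m i j / complex_of_real (be (Suc m))"
proof -
  have ne: "gk_state n1 n2 n3 s A B (Suc m) \<noteq> None" by (rule st_le) (use m in simp)
  have W: "fslice n3 (\<lambda>i j l. tprod n3 n1 (ttrans n3 A) (gkU n1 n2 n3 s A B (Suc m)) i j l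
            - tscale n3 (gka n1 n2 n3 s A B (Suc m)) (gkV n1 n2 n3 s A B m) i j l) t = WV m"
    unfolding WV_def by (intro ext) (simp add: fslice_diff fslice_tprod_adj[OF n3 t] fslice_tscale[OF n3 t])
  note nt = norm_tube[OF n3 t gk_step'(1)[OF ne], unfolded W]
  show "fslice n3 (gkb n1 n2 n3 s A B (Suc m)) t i j = complex_of_real (be (Suc m))"
    "be (Suc m) = cfrob n2 s (WV m)" "be (Suc m) \<noteq> 0"
    "Vh (Suc m) i j = WV m i j / complex_of_real (be (Suc m))"
    by (rule nt)+
qed

lemma stepU:
  assumes m: "m < k"
  shows "fslice n3 (gka n1 n2 n3 s A B (Suc (Suc m))) t i j = complex_of_real (al (Suc (Suc m)))"
    and "al (Suc (Suc m)) = cfrob n1 s (WU m)"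
    and "al (Suc (Suc m)) \<noteq> 0"
    and "Uh (Suc (Suc m)) i j = WU m i j / complex_of_real (al (Suc (Suc m)))"
proof -
  have ne: "gk_state n1 n2 n3 s A B (Suc m) \<noteq> None" by (rule st_le) (use m in simp)
  have W: "fslice n3 (\<lambda>i j l. tprod n3 n2 A (gkV n1 n2 n3 s A B (Suc m)) i j l
            - tscale n3 (gkb n1 n2 n3 s A B (Suc m)) (gkU n1 n2 n3 s A B (Suc m)) i j l) t = WU m"
    unfolding WU_def by (intro ext) (simp add: fslice_diff fslice_tprod_mmul[OF n3 t] fslice_tscale[OF n3 t])
  note nt = norm_tube[OF n3 t gk_step'(2)[OF ne], unfolded W]
  show "fslice n3 (gka n1 n2 n3 s A B (Suc (Suc m))) t i j = complex_of_real (al (Suc (Suc m)))"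
    "al (Suc (Suc m)) = cfrob n1 s (WU m)" "al (Suc (Suc m)) \<noteq> 0"
    "Uh (Suc (Suc m)) i j = WU m i j / complex_of_real (al (Suc (Suc m)))"
    by (rule nt)+
qed

lemma a_real:
  assumes "1 \<le> j" "j \<le> Suc k"
  shows "fslice n3 (gka n1 n2 n3 s A B j) t i i' = complex_of_real (al j)"
proof (cases "j = 1")
  case True show ?thesis unfolding True by (rule base(1))
next
  case False
  define m where "m = j - 2"
  have j: "j = Suc (Suc m)" and mk: "m < k" using assms False unfolding m_def by auto
  show ?thesis unfolding j by (rule stepU(1)[OF mk])
qed

lemma b_real:
  assumes "1 \<le> j" "j \<le> k"
  shows "fslice n3 (gkb n1 n2 n3 s A B j) t i i' = complex_of_real (be j)"
proof -
  obtain m where j: "j = Suc m" and mk: "m < k" using assms by (cases j) auto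
  show ?thesis unfolding j by (rule stepV(1)[OF mk])
qed

lemma unit_of:
  assumes "\<And>i j. X i j = W i j / complex_of_real c" "c = cfrob p q W" "c \<noteq> 0"
  shows "ip p q X X = 1"
proof -
  have "X = (\<lambda>i j. W i j / complex_of_real (cfrob p q W))" using assms by (intro ext) simp
  thus ?thesis using ip_normalized assms by simp
qed

lemma lz: "lanczos n1 n2 s k Ah Uh Vh al be"
proof
  show "\<And>i j. Vh 0 i j = 0"
    using gk_base(2)[OF st_le[of 0]] by (simp add: fslice_zero)
  show "ip n1 s (Uh 1) (Uh 1) = 1"
    by (rule unit_of[OF base(4) base(2) base(3)])
  fix m assume m: "m < k"
  show "ip n2 s (Vh (Suc m)) (Vh (Suc m)) = 1"
    by (rule unit_of[OF stepV(4)[OF m] stepV(2)[OF m] stepV(3)[OF m]])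
  show "ip n1 s (Uh (Suc (Suc m))) (Uh (Suc (Suc m))) = 1"
    by (rule unit_of[OF stepU(4)[OF m] stepU(2)[OF m] stepU(3)[OF m]])
  show "al (Suc (Suc m)) \<noteq> 0" using stepU(3)[OF m] .
  show "be (Suc m) \<noteq> 0" using stepV(3)[OF m] .
  fix i j
  have hV: "complex_of_real (be (Suc m)) * Vh (Suc m) i j = WV m i j"
    using stepV(3)[OF m] unfolding stepV(4)[OF m] by simp
  have ea: "complex_of_real (al (Suc m)) = fslice n3 (gka n1 n2 n3 s A B (Suc m)) t 0 0"
    by (rule a_real[symmetric]) (use m in auto)
  show "complex_of_real (be (Suc m)) * Vh (Suc m) i j =
        mmul n1 (adj Ah) (Uh (Suc m)) i j - complex_of_real (al (Suc m)) * Vh m i j"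
    unfolding ea hV unfolding WV_def by simp
  have hU: "complex_of_real (al (Suc (Suc m))) * Uh (Suc (Suc m)) i j = WU m i j"
    using stepU(3)[OF m] unfolding stepU(4)[OF m] by simp
  have eb: "complex_of_real (be (Suc m)) = fslice n3 (gkb n1 n2 n3 s A B (Suc m)) t 0 0"
    by (rule b_real[symmetric]) (use m in auto)
  show "complex_of_real (al (Suc (Suc m))) * Uh (Suc (Suc m)) i j =
        mmul n2 Ah (Vh (Suc m)) i j - complex_of_real (be (Suc m)) * Uh (Suc m) i j"
    unfolding eb hU unfolding WU_def by simp
qed

end

context gkslice
begin

abbreviation "aa j \<equiv> fslice n3 (gka n1 n2 n3 s A B j) t 0 0"
abbreviation "bb j \<equiv> fslice n3 (gkb n1 n2 n3 s A B j) t 0 0"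

lemma MV':
  assumes q: "q < k"
  shows "mmul n2 Ah (Vh (Suc q)) = (\<lambda>a b. aa (Suc (Suc q)) * Uh (Suc (Suc q)) a b + bb (Suc q) * Uh (Suc q) a b)"
proof -
  have ea: "complex_of_real (al (Suc (Suc q))) = aa (Suc (Suc q))"
    by (rule a_real[symmetric]) (use q in auto)
  have eb: "complex_of_real (be (Suc q)) = bb (Suc q)"
    by (rule b_real[symmetric]) (use q in auto)
  show ?thesis using lanczos.MV[OF lz, of "Suc q"] q unfolding ea eb by simp
qed

lemma B_slice: "fslice n3 B t i j = aa 1 * Uh 1 i j"
proof -
  have ea: "complex_of_real (al 1) = aa 1" by (rule a_real[symmetric]) auto
  have nz: "aa 1 \<noteq> 0" using base(3) ea by (metis of_real_eq_0_iff)
  show ?thesis unfolding base(4) ea using nz by simp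
qed

lemma Vcat_slice: "fslice n3 (gkVcat n1 n2 n3 s A B) t p c = Vh (c div s + 1) p (c mod s)"
  unfolding fslice_def gkVcat_def by simp

lemma Xk_slice:
  assumes j: "j < s"
  shows "fslice n3 (tprod n3 (k * s) (gkVcat n1 n2 n3 s A B) (tkron n3 s s Y tid)) t p j
       = (\<Sum>q<k. Vh (Suc q) p j * fslice n3 Y t q 0)"
proof -
  have s0: "0 < s" using j by simp
  have "fslice n3 (tprod n3 (k * s) (gkVcat n1 n2 n3 s A B) (tkron n3 s s Y tid)) t p j
      = (\<Sum>c<k * s. Vh (c div s + 1) p (c mod s) * (fslice n3 Y t (c div s) 0 * (if c mod s = j then 1 else 0)))"
    using j by (simp add: fslice_tprod[OF n3 t] Vcat_slice fslice_tkron[OF n3 t] fslice_tid[OF n3])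
  also have "\<dots> = (\<Sum>q<k. \<Sum>r<s. Vh (Suc q) p r * (fslice n3 Y t q 0 * (if r = j then 1 else 0)))"
    unfolding sum_div_mod using s0 by (intro sum.cong refl) simp
  also have "\<dots> = (\<Sum>q<k. Vh (Suc q) p j * fslice n3 Y t q 0)"
    using j by (intro sum.cong refl) (simp add: if_distrib cong: if_cong)
  finally show ?thesis .
qed

lemma AXk_slice:
  assumes j: "j < s"
  shows "fslice n3 (tprod n3 n2 A (tprod n3 (k * s) (gkVcat n1 n2 n3 s A B) (tkron n3 s s Y tid))) t i j
       = (\<Sum>q<k. fslice n3 Y t q 0 * (aa (Suc (Suc q)) * Uh (Suc (Suc q)) i j + bb (Suc q) * Uh (Suc q) i j))"
proof -
  have "fslice n3 (tprod n3 n2 A (tprod n3 (k * s) (gkVcat n1 n2 n3 s A B) (tkron n3 s s Y tid))) t i j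
      = (\<Sum>p<n2. \<Sum>q<k. Ah i p * (Vh (Suc q) p j * fslice n3 Y t q 0))"
    by (simp only: fslice_tprod[OF n3 t, of n2 A] Xk_slice[OF j] sum_distrib_left)
  also have "\<dots> = (\<Sum>q<k. \<Sum>p<n2. Ah i p * (Vh (Suc q) p j * fslice n3 Y t q 0))"
    by (rule sum.swap)
  also have "\<dots> = (\<Sum>q<k. fslice n3 Y t q 0 * mmul n2 Ah (Vh (Suc q)) i j)"
    unfolding mmul_def by (simp add: sum_distrib_left mult_ac)
  also have "\<dots> = (\<Sum>q<k. fslice n3 Y t q 0 * (aa (Suc (Suc q)) * Uh (Suc (Suc q)) i j + bb (Suc q) * Uh (Suc q) i j))"
    by (intro sum.cong refl) (simp add: MV')
  finally show ?thesis .
qed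

lemma gkC_slice:
  "fslice n3 (gkC n1 n2 n3 s A B k) t i q =
     (if q < k \<and> i = q then bb (q + 1) else if q < k \<and> i = q + 1 then aa (q + 2) else 0)"
proof (cases "q < k \<and> i = q")
  case c1: True
  show ?thesis unfolding fslice_def gkC_def if_P[OF c1] by simp
next
  case c1: False
  show ?thesis
  proof (cases "q < k \<and> i = q + 1")
    case c2: True
    show ?thesis unfolding fslice_def gkC_def if_not_P[OF c1] if_P[OF c2] by simp
  next
    case c2: False
    show ?thesis unfolding fslice_def gkC_def if_not_P[OF c1] if_not_P[OF c2] by simp
  qed
qed

lemma r_slice:
  "fslice n3 (\<lambda>i j l. tprod n3 1 E1 (gka n1 n2 n3 s A B 1) i j l - tprod n3 k (gkC n1 n2 n3 s A B k) Y i j l) t i 0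
   = (if i = 0 then aa 1 else 0)
     - (\<Sum>q<k. ((if i = q then bb (Suc q) else 0) + (if i = Suc q then aa (Suc (Suc q)) else 0)) * fslice n3 Y t q 0)"
proof -
  have "fslice n3 (\<lambda>i j l. tprod n3 1 E1 (gka n1 n2 n3 s A B 1) i j l - tprod n3 k (gkC n1 n2 n3 s A B k) Y i j l) t i 0
     = (if i = 0 then aa 1 else 0) - (\<Sum>q<k. fslice n3 (gkC n1 n2 n3 s A B k) t i q * fslice n3 Y t q 0)"
    by (simp add: fslice_diff fslice_tprod[OF n3 t] fslice_E1[OF n3])
  also have "(\<Sum>q<k. fslice n3 (gkC n1 n2 n3 s A B k) t i q * fslice n3 Y t q 0)
     = (\<Sum>q<k. ((if i = q then bb (Suc q) else 0) + (if i = Suc q then aa (Suc (Suc q)) else 0)) * fslice n3 Y t q 0)"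
    by (intro sum.cong refl) (auto simp: gkC_slice)
  finally show ?thesis .
qed

end

lemma ip_self': "ip p q X X = complex_of_real (\<Sum>a<p. \<Sum>b<q. (cmod (X a b))^2)"
  unfolding ip_def of_real_sum complex_norm_square by (simp add: mult.commute)

context gkslice
begin

lemma R_expand:
  assumes b: "b < s"
  shows "fslice n3 (\<lambda>i j l. B i j l - tprod n3 n2 A (tprod n3 (k * s) (gkVcat n1 n2 n3 s A B) (tkron n3 s s Y tid)) i j l) t a b
    = (\<Sum>i<Suc k. fslice n3 (\<lambda>i j l. tprod n3 1 E1 (gka n1 n2 n3 s A B 1) i j l - tprod n3 k (gkC n1 n2 n3 s A B k) Y i j l) t i 0
                  * Uh (Suc i) a b)"
proof -
  let ?Y = "\<lambda>q. fslice n3 Y t q 0"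
  let ?c = "\<lambda>i q. (if i = q then bb (Suc q) else 0) + (if i = Suc q then aa (Suc (Suc q)) else 0)"
  have L: "fslice n3 (\<lambda>i j l. B i j l - tprod n3 n2 A (tprod n3 (k * s) (gkVcat n1 n2 n3 s A B) (tkron n3 s s Y tid)) i j l) t a b
     = aa 1 * Uh 1 a b - (\<Sum>q<k. ?Y q * (aa (Suc (Suc q)) * Uh (Suc (Suc q)) a b + bb (Suc q) * Uh (Suc q) a b))"
    by (simp only: fslice_diff B_slice AXk_slice[OF b])
  have "(\<Sum>i<Suc k. fslice n3 (\<lambda>i j l. tprod n3 1 E1 (gka n1 n2 n3 s A B 1) i j l - tprod n3 k (gkC n1 n2 n3 s A B k) Y i j l) t i 0
                  * Uh (Suc i) a b)
     = (\<Sum>i<Suc k. ((if i = 0 then aa 1 else 0) - (\<Sum>q<k. ?c i q * ?Y q)) * Uh (Suc i) a b)"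
    by (simp only: r_slice)
  also have "\<dots> = (\<Sum>i<Suc k. (if i = 0 then aa 1 else 0) * Uh (Suc i) a b)
                 - (\<Sum>i<Suc k. \<Sum>q<k. ?c i q * ?Y q * Uh (Suc i) a b)"
    by (simp add: left_diff_distrib sum_subtractf sum_distrib_right)
  also have "(\<Sum>i<Suc k. (if i = 0 then aa 1 else 0) * Uh (Suc i) a b) = aa 1 * Uh 1 a b"
    by (subst sum.lessThan_Suc_shift) simp
  also have "(\<Sum>i<Suc k. \<Sum>q<k. ?c i q * ?Y q * Uh (Suc i) a b) = (\<Sum>q<k. \<Sum>i<Suc k. ?c i q * ?Y q * Uh (Suc i) a b)"
    by (rule sum.swap)
  also have "\<dots> = (\<Sum>q<k. ?Y q * (aa (Suc (Suc q)) * Uh (Suc (Suc q)) a b + bb (Suc q) * Uh (Suc q) a b))"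
  proof (rule sum.cong[OF refl])
    fix q assume "q \<in> {..<k}"
    hence q: "q < Suc k" "Suc q < Suc k" by auto
    have "(\<Sum>i<Suc k. ?c i q * ?Y q * Uh (Suc i) a b)
       = (\<Sum>i<Suc k. (if i = q then bb (Suc q) * ?Y q * Uh (Suc q) a b else 0))
         + (\<Sum>i<Suc k. (if i = Suc q then aa (Suc (Suc q)) * ?Y q * Uh (Suc (Suc q)) a b else 0))"
      unfolding sum.distrib[symmetric] by (rule sum.cong[OF refl]) auto
    also have "\<dots> = bb (Suc q) * ?Y q * Uh (Suc q) a b + aa (Suc (Suc q)) * ?Y q * Uh (Suc (Suc q)) a b"
      using q by simp
    finally show "(\<Sum>i<Suc k. ?c i q * ?Y q * Uh (Suc i) a b)
       = ?Y q * (aa (Suc (Suc q)) * Uh (Suc (Suc q)) a b + bb (Suc q) * Uh (Suc q) a b)"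
      by (simp add: algebra_simps)
  qed
  finally show ?thesis using L by simp
qed

lemma slice_norm:
  "(\<Sum>a<n1. \<Sum>b<s. (cmod (fslice n3 (\<lambda>i j l. B i j l - tprod n3 n2 A (tprod n3 (k * s) (gkVcat n1 n2 n3 s A B) (tkron n3 s s Y tid)) i j l) t a b))^2)
   = (\<Sum>i<Suc k. (cmod (fslice n3 (\<lambda>i j l. tprod n3 1 E1 (gka n1 n2 n3 s A B 1) i j l - tprod n3 k (gkC n1 n2 n3 s A B k) Y i j l) t i 0))^2)"
  (is "?L = ?R")
proof -
  let ?X = "fslice n3 (\<lambda>i j l. B i j l - tprod n3 n2 A (tprod n3 (k * s) (gkVcat n1 n2 n3 s A B) (tkron n3 s s Y tid)) i j l) t"
  let ?r = "\<lambda>i. fslice n3 (\<lambda>i j l. tprod n3 1 E1 (gka n1 n2 n3 s A B 1) i j l - tprod n3 k (gkC n1 n2 n3 s A B k) Y i j l) t i 0"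
  have orth: "ip n1 s (Uh (Suc i)) (Uh (Suc j)) = (if i = j then 1 else 0)" if "i < Suc k" "j < Suc k" for i j
    using lanczos.orth[OF lz, of k] that unfolding lanczos.orthU_def[OF lz] by auto
  have "complex_of_real ?L = ip n1 s ?X ?X" by (simp only: ip_self')
  also have "\<dots> = ip n1 s (\<lambda>a b. \<Sum>i<Suc k. ?r i * Uh (Suc i) a b) (\<lambda>a b. \<Sum>i<Suc k. ?r i * Uh (Suc i) a b)"
    by (rule ip_cong) (rule R_expand)
  also have "\<dots> = (\<Sum>i<Suc k. cnj (?r i) * ?r i)"
    by (rule ip_expand[where U="\<lambda>i. Uh (Suc i)"]) (rule orth)
  also have "\<dots> = complex_of_real ?R"
    unfolding of_real_sum complex_norm_square by (simp add: mult.commute)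
  finally show ?thesis by (simp only: of_real_eq_iff)
qed

end

theorem proposition14:
  fixes n1 n2 n3 s k :: nat and A B Y :: tensor
  assumes "0 < n1" "0 < n2" "0 < n3" "0 < s"
    and nobreak: "gk_state n1 n2 n3 s A B k \<noteq> None"
  defines "Xk \<equiv> tprod n3 (k * s) (gkVcat n1 n2 n3 s A B) (tkron n3 s s Y tid)"
  shows "frob n1 s n3 (\<lambda>i j l. B i j l - tprod n3 n2 A Xk i j l)
       = tl2 (k + 1) n3 (\<lambda>i j l. tprod n3 1 E1 (gka n1 n2 n3 s A B 1) i j l
                                 - tprod n3 k (gkC n1 n2 n3 s A B k) Y i j l)"
proof -
  let ?R = "\<lambda>i j l. B i j l - tprod n3 n2 A Xk i j l"
  let ?Yr = "\<lambda>i j l. tprod n3 1 E1 (gka n1 n2 n3 s A B 1) i j l - tprod n3 k (gkC n1 n2 n3 s A B k) Y i j l"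
  have n3: "0 < n3" by fact
  have sn: "(\<Sum>a<n1. \<Sum>b<s. (cmod (fslice n3 ?R t a b))^2) = (\<Sum>i<Suc k. (cmod (fslice n3 ?Yr t i 0))^2)"
    if t: "t < n3" for t
  proof -
    interpret gkslice n1 n2 n3 s k A B t
      by unfold_locales (use n3 t nobreak in auto)
    show ?thesis unfolding Xk_def by (rule slice_norm)
  qed
  have pv: "(\<Sum>l<n3. (?R a b l)^2) = (\<Sum>t<n3. (cmod (fslice n3 ?R t a b))^2) / real n3" for a b
    using parseval[OF n3, of "\<lambda>l. ?R a b l"] n3 unfolding fslice_def by (simp add: field_simps)
  have "(\<Sum>a<n1. \<Sum>b<s. \<Sum>l<n3. (?R a b l)^2) = (\<Sum>a<n1. \<Sum>b<s. \<Sum>t<n3. (cmod (fslice n3 ?R t a b))^2) / real n3"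
    by (simp only: pv sum_divide_distrib)
  also have "(\<Sum>a<n1. \<Sum>b<s. \<Sum>t<n3. (cmod (fslice n3 ?R t a b))^2) = (\<Sum>t<n3. \<Sum>a<n1. \<Sum>b<s. (cmod (fslice n3 ?R t a b))^2)"
    by (subst sum.swap, rule sum.cong[OF refl], rule sum.swap)
  also have "\<dots> = (\<Sum>t<n3. \<Sum>i<Suc k. (cmod (fslice n3 ?Yr t i 0))^2)"
    by (rule sum.cong[OF refl]) (simp add: sn)
  finally have "(\<Sum>a<n1. \<Sum>b<s. \<Sum>l<n3. (?R a b l)^2) = (\<Sum>t<n3. \<Sum>i<Suc k. (cmod (fslice n3 ?Yr t i 0))^2) / real n3" .
  thus ?thesis unfolding frob_def tl2_def by (simp add: real_sqrt_divide)
qed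

end
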